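(* Let $\Omega\subseteq\mathbb R^3$ be a nonempty open set, $V\in\Omega$ and $k\ge0$. Then $$\{\kappa_{\vec x-V}(\mathbf q_1):\mathbf q_1\in[\Pi^k(\Omega)]^3\}=\{\kappa_{\vec x-V}(\mathbf q_2):\mathbf q_2\in[\Pi^k(\Omega)]^3,\ \operatorname{div}\mathbf q_2=0\}.$$
   Context: $\Pi^k(\Omega)$ denotes the space of polynomials of total degree at most $k$ in $\vec x=(x,y,z)$, restricted to $\Omega$. For $V\in\mathbb R^3$ the Koszul operator is $\kappa_{\vec x-V}(\mathbf a):=(\vec x-V)\times\mathbf a$ for vector fields $\mathbf a$. *)

theory Defs
  imports "HOL-Analysis.Analysis"
begin

definition poly3 :: "nat \<Rightarrow> (real^3 \<Rightarrow> real) set" where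
  "poly3 k = {p. \<exists>c :: nat \<Rightarrow> nat \<Rightarrow> nat \<Rightarrow> real. \<forall>v.
     p v = (\<Sum>(a,b,d) \<in> {(a,b,d). a + b + d \<le> k}. c a b d * (v$1)^a * (v$2)^b * (v$3)^d)}"

definition polyvec3 :: "nat \<Rightarrow> (real^3 \<Rightarrow> real^3) set" where
  "polyvec3 k = {q. \<forall>i. (\<lambda>v. q v $ i) \<in> poly3 k}"

definition divergence :: "(real^3 \<Rightarrow> real^3) \<Rightarrow> real^3 \<Rightarrow> real" where
  "divergence q v = (\<Sum>i\<in>UNIV. frechet_derivative q (at v) (axis i 1) $ i)"

definition koszul :: "real^3 \<Rightarrow> (real^3 \<Rightarrow> real^3) \<Rightarrow> real^3 \<Rightarrow> real^3" where
  "koszul V a v = cross3 (v - V) (a v)"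

end

theory Submission
  imports Defs
begin


definition mon :: "real^3 \<Rightarrow> nat \<Rightarrow> nat \<Rightarrow> nat \<Rightarrow> real^3 \<Rightarrow> real" where
  "mon V a b d v = (v$1 - V$1)^a * (v$2 - V$2)^b * (v$3 - V$3)^d"

definition S :: "nat \<Rightarrow> (nat\<times>nat\<times>nat) set" where "S k = {(a,b,d). a+b+d \<le> k}"

definition Q :: "real^3 \<Rightarrow> nat \<Rightarrow> (real^3 \<Rightarrow> real) set" where
  "Q V k = {p. \<exists>c. \<forall>v. p v = (\<Sum>(a,b,d)\<in>S k. c a b d * mon V a b d v)}"

lemma poly3_Q: "poly3 k = Q 0 k"
  unfolding poly3_def Q_def S_def mon_def by (simp add: mult.assoc)

lemma finite_S: "finite (S k)"
  by (rule finite_subset[of _ "{..k}\<times>{..k}\<times>{..k}"]) (auto simp: S_def)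

lemma Q_zero: "(\<lambda>v. 0) \<in> Q V k"
  unfolding Q_def by (rule CollectI, rule exI[of _ "\<lambda>a b d. 0"]) simp

lemma Q_add: assumes "p \<in> Q V k" "r \<in> Q V k" shows "(\<lambda>v. p v + r v) \<in> Q V k"
proof -
  obtain c1 where c1: "\<forall>v. p v = (\<Sum>(a,b,d)\<in>S k. c1 a b d * mon V a b d v)" using assms(1) by (auto simp: Q_def)
  obtain c2 where c2: "\<forall>v. r v = (\<Sum>(a,b,d)\<in>S k. c2 a b d * mon V a b d v)" using assms(2) by (auto simp: Q_def)
  show ?thesis unfolding Q_def
    apply (rule CollectI, rule exI[of _ "\<lambda>a b d. c1 a b d + c2 a b d"])
    apply (simp add: c1 c2 sum.distrib[symmetric])
    apply (intro allI sum.cong refl)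
    apply (auto simp: algebra_simps)
    done
qed

lemma Q_scale: assumes "p \<in> Q V k" shows "(\<lambda>v. r * p v) \<in> Q V k"
proof -
  obtain c1 where c1: "\<forall>v. p v = (\<Sum>(a,b,d)\<in>S k. c1 a b d * mon V a b d v)" using assms(1) by (auto simp: Q_def)
  show ?thesis unfolding Q_def
    apply (rule CollectI, rule exI[of _ "\<lambda>a b d. r * c1 a b d"])
    apply (simp add: c1 sum_distrib_left)
    apply (intro allI sum.cong refl)
    apply (auto simp: algebra_simps)
    done
qed

lemma Q_sum: assumes "finite I" "\<And>i. i \<in> I \<Longrightarrow> (\<lambda>v. f i v) \<in> Q V k"
  shows "(\<lambda>v. \<Sum>i\<in>I. f i v) \<in> Q V k"
  using assms
proof (induction I rule: finite_induct)
  case empty then show ?case using Q_zero by simp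
next
  case (insert x F)
  then show ?case using Q_add[of "\<lambda>v. f x v" V k "\<lambda>v. \<Sum>i\<in>F. f i v"] by simp
qed

lemma Q_mon: assumes "a+b+d \<le> k" shows "mon V a b d \<in> Q V k"
proof -
  have eq: "mon V a b d v = (\<Sum>(a',b',d')\<in>S k. (if (a',b',d') = (a,b,d) then 1 else 0) * mon V a' b' d' v)" for v
  proof -
    have "(\<Sum>(a',b',d')\<in>S k. (if (a',b',d') = (a,b,d) then 1 else 0) * mon V a' b' d' v)
        = (\<Sum>x\<in>S k. if x = (a,b,d) then mon V a b d v else 0)"
      by (rule sum.cong) (auto split: prod.splits)
    also have "\<dots> = mon V a b d v" using assms finite_S by (simp add: S_def)
    finally show ?thesis by simp
  qed
  show ?thesis unfolding Q_def
    by (rule CollectI, rule exI[of _ "\<lambda>a' b' d'. if (a',b',d') = (a,b,d) then 1 else 0"], intro allI, rule eq)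
qed

lemma binom_shift: "(x - w)^a = (\<Sum>i\<le>a. (of_nat (a choose i) * (w' - w)^(a-i)) * (x - w')^i)" for x w w' :: real
proof -
  have "(x - w)^a = ((x - w') + (w' - w))^a" by simp
  also have "\<dots> = (\<Sum>i\<le>a. of_nat (a choose i) * (x - w')^i * (w' - w)^(a-i))" by (rule binomial_ring)
  finally show ?thesis by (simp add: mult_ac)
qed

lemma Q_shift_mon: assumes "a+b+d \<le> k" shows "mon W a b d \<in> Q V k"
proof -
  define A where "A i = of_nat (a choose i) * (V$1 - W$1)^(a-i)" for i
  define B where "B j = of_nat (b choose j) * (V$2 - W$2)^(b-j)" for j
  define D where "D l = of_nat (d choose l) * (V$3 - W$3)^(d-l)" for l
  have eq: "mon W a b d v = (\<Sum>i\<le>a. \<Sum>j\<le>b. \<Sum>l\<le>d. (A i * B j * D l) * mon V i j l v)" for v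
    unfolding mon_def A_def B_def D_def
    apply (subst binom_shift[of _ _ a "V$1"], subst binom_shift[of _ _ b "V$2"], subst binom_shift[of _ _ d "V$3"])
    apply (simp add: sum_distrib_left sum_distrib_right mult_ac)
    apply (rule sum.swap)
    done
  show ?thesis
    unfolding eq[abs_def]
    by (intro Q_sum Q_scale Q_mon finite_atMost) (use assms in auto)
qed

lemma Q_sum_S: assumes "\<And>a b d. a+b+d \<le> k \<Longrightarrow> (\<lambda>v. f a b d v) \<in> Q V k'"
  shows "(\<lambda>v. \<Sum>(a,b,d)\<in>S k. f a b d v) \<in> Q V k'"
proof -
  have "(\<lambda>v. \<Sum>x\<in>S k. (case x of (a,b,d) \<Rightarrow> f a b d v)) \<in> Q V k'"
    by (rule Q_sum[OF finite_S]) (auto simp: S_def intro: assms)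
  then show ?thesis by (simp add: split_def)
qed

lemma Q_change: assumes "p \<in> Q W k" "k \<le> k'" shows "p \<in> Q V k'"
proof -
  obtain c1 where c1: "\<forall>v. p v = (\<Sum>(a,b,d)\<in>S k. c1 a b d * mon W a b d v)" using assms(1) by (auto simp: Q_def)
  have "p = (\<lambda>v. \<Sum>(a,b,d)\<in>S k. c1 a b d * mon W a b d v)" using c1 by auto
  also have "\<dots> \<in> Q V k'"
    by (rule Q_sum_S, rule Q_scale, rule Q_shift_mon) (use assms(2) in auto)
  finally show ?thesis .
qed

lemma hd_nth[derivative_intros]: "((\<lambda>x::real^3. x$i) has_derivative (\<lambda>x. x$i)) F"
  by (rule bounded_linear.has_derivative[OF bounded_linear_vec_nth has_derivative_ident])

definition dmon :: "real^3 \<Rightarrow> nat \<Rightarrow> nat \<Rightarrow> nat \<Rightarrow> real^3 \<Rightarrow> real^3 \<Rightarrow> real" where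
  "dmon V a b d v h = real a * mon V (a-1) b d v * h$1 + real b * mon V a (b-1) d v * h$2
       + real d * mon V a b (d-1) v * h$3"

lemma mon_deriv: "(mon V a b d has_derivative dmon V a b d v) (at v)"
  unfolding mon_def dmon_def
  by (rule derivative_eq_intros refl)+ (simp add: algebra_simps fun_eq_iff)

definition PP :: "real^3 \<Rightarrow> real \<Rightarrow> real \<Rightarrow> real \<Rightarrow> nat \<Rightarrow> nat \<Rightarrow> nat \<Rightarrow> real^3 \<Rightarrow> real" where
  "PP V c1 c2 c3 a b d v = (1 / real (a+b+d+2)) * (c1 * real a * mon V (a-1) b d v + c2 * real b * mon V a (b-1) d v
      + c3 * real d * mon V a b (d-1) v)"

definition DPP :: "real^3 \<Rightarrow> real \<Rightarrow> real \<Rightarrow> real \<Rightarrow> nat \<Rightarrow> nat \<Rightarrow> nat \<Rightarrow> real^3 \<Rightarrow> real^3 \<Rightarrow> real" where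
  "DPP V c1 c2 c3 a b d v h = (1 / real (a+b+d+2)) * (c1 * real a * dmon V (a-1) b d v h + c2 * real b * dmon V a (b-1) d v h
      + c3 * real d * dmon V a b (d-1) v h)"

lemma PP_deriv: "(PP V c1 c2 c3 a b d has_derivative DPP V c1 c2 c3 a b d v) (at v)"
  unfolding PP_def[abs_def] DPP_def[abs_def]
  by (rule derivative_eq_intros refl mon_deriv)+ (simp add: fun_eq_iff algebra_simps)

definition H :: "real^3 \<Rightarrow> real \<Rightarrow> real \<Rightarrow> real \<Rightarrow> nat \<Rightarrow> nat \<Rightarrow> nat \<Rightarrow> real^3 \<Rightarrow> real^3" where
  "H V c1 c2 c3 a b d v = (c1 * mon V a b d v) *\<^sub>R axis 1 1 + (c2 * mon V a b d v) *\<^sub>R axis 2 1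
     + (c3 * mon V a b d v) *\<^sub>R axis 3 1 - PP V c1 c2 c3 a b d v *\<^sub>R (v - V)"

definition DH :: "real^3 \<Rightarrow> real \<Rightarrow> real \<Rightarrow> real \<Rightarrow> nat \<Rightarrow> nat \<Rightarrow> nat \<Rightarrow> real^3 \<Rightarrow> real^3 \<Rightarrow> real^3" where
  "DH V c1 c2 c3 a b d v h = (c1 * dmon V a b d v h) *\<^sub>R axis 1 1 + (c2 * dmon V a b d v h) *\<^sub>R axis 2 1
     + (c3 * dmon V a b d v h) *\<^sub>R axis 3 1 - (DPP V c1 c2 c3 a b d v h *\<^sub>R (v - V) + PP V c1 c2 c3 a b d v *\<^sub>R h)"

lemma H_deriv: "(H V c1 c2 c3 a b d has_derivative DH V c1 c2 c3 a b d v) (at v)"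
  unfolding H_def[abs_def] DH_def[abs_def]
  by (rule derivative_eq_intros refl mon_deriv PP_deriv)+ (simp add: algebra_simps fun_eq_iff)

lemma mul1: "real m * mon V (m-1) b d v * (v$1 - V$1) = real m * mon V m b d v"
  by (cases m) (auto simp: mon_def)
lemma mul2: "real m * mon V a (m-1) d v * (v$2 - V$2) = real m * mon V a m d v"
  by (cases m) (auto simp: mon_def)
lemma mul3: "real m * mon V a b (m-1) v * (v$3 - V$3) = real m * mon V a b m v"
  by (cases m) (auto simp: mon_def)

lemma euler: "dmon V a b d v (v - V) = (real a + real b + real d) * mon V a b d v"
proof -
  have "dmon V a b d v (v - V) = real a * mon V (a-1) b d v * (v$1 - V$1) + real b * mon V a (b-1) d v * (v$2 - V$2)
       + real d * mon V a b (d-1) v * (v$3 - V$3)" by (simp add: dmon_def)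
  also have "\<dots> = (real a + real b + real d) * mon V a b d v"
    by (simp only: mul1 mul2 mul3) (simp add: algebra_simps)
  finally show ?thesis .
qed

lemma DPP_lin: "DPP V c1 c2 c3 a b d v h = h$1 * DPP V c1 c2 c3 a b d v (axis 1 1)
   + h$2 * DPP V c1 c2 c3 a b d v (axis 2 1) + h$3 * DPP V c1 c2 c3 a b d v (axis 3 1)"
  by (simp add: DPP_def dmon_def axis_def algebra_simps)

lemma rm1: "real a * real (a - 1) = real a * (real a - 1)"
  by (cases a) auto

lemma H_div: "(\<Sum>j\<in>UNIV. DH V c1 c2 c3 a b d v (axis j 1) $ j) = 0"
proof -
  let ?D = "DPP V c1 c2 c3 a b d v"
  have 1: "(\<Sum>j\<in>UNIV. DH V c1 c2 c3 a b d v (axis j 1) $ j) =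
     c1 * dmon V a b d v (axis 1 1) + c2 * dmon V a b d v (axis 2 1) + c3 * dmon V a b d v (axis 3 1)
     - (?D (axis 1 1) * (v$1 - V$1) + ?D (axis 2 1) * (v$2 - V$2) + ?D (axis 3 1) * (v$3 - V$3))
     - 3 * PP V c1 c2 c3 a b d v"
    by (simp add: sum_3 DH_def axis_def algebra_simps)
  have 2: "?D (axis 1 1) * (v$1 - V$1) + ?D (axis 2 1) * (v$2 - V$2) + ?D (axis 3 1) * (v$3 - V$3) = ?D (v - V)"
    by (subst DPP_lin[of _ _ _ _ _ _ _ _ "v - V"]) (simp add: algebra_simps)
  have 3: "?D (v - V) = (1 / real (a+b+d+2)) * (c1 * real a * ((real (a-1) + real b + real d) * mon V (a-1) b d v)
      + c2 * real b * ((real a + real (b-1) + real d) * mon V a (b-1) d v)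
      + c3 * real d * ((real a + real b + real (d-1)) * mon V a b (d-1) v))"
    by (simp add: DPP_def euler)
  have 4: "dmon V a b d v (axis 1 1) = real a * mon V (a-1) b d v"
     "dmon V a b d v (axis 2 1) = real b * mon V a (b-1) d v"
     "dmon V a b d v (axis 3 1) = real d * mon V a b (d-1) v"
    by (simp_all add: dmon_def axis_def)
  have 5: "c * real a * ((real (a-1) + real b + real d) * X) = c * real a * ((real a - 1 + real b + real d) * X)"
    "c * real b * ((real a + real (b-1) + real d) * X) = c * real b * ((real a + real b - 1 + real d) * X)"
    "c * real d * ((real a + real b + real (d-1)) * X) = c * real d * ((real a + real b + real d - 1) * X)"
    for c X by (cases a; simp; fail | cases b; simp; fail | cases d; simp)+
  have n: "real a + real b + real d + 2 \<noteq> 0" by linarith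
  show ?thesis unfolding 1 2 3 4 PP_def 5
    using n by (simp add: field_simps)
qed


lemma Q_diff: assumes "p \<in> Q V k" "r \<in> Q V k" shows "(\<lambda>v. p v - r v) \<in> Q V k"
  using Q_add[OF assms(1) Q_scale[OF assms(2), of "-1"]] by simp

lemma Q_ymul: assumes "a+b+d < k" shows "(\<lambda>v. (v$j - V$j) * mon V a b d v) \<in> Q V k"
proof -
  consider "j = 1" | "j = 2" | "j = 3" using exhaust_3 by blast
  then show ?thesis
  proof cases
    case 1
    have "(\<lambda>v. (v$j - V$j) * mon V a b d v) = mon V (Suc a) b d" using 1 by (auto simp: mon_def fun_eq_iff)
    then show ?thesis using Q_mon[of "Suc a" b d k V] assms by simp
  next
    case 2
    have "(\<lambda>v. (v$j - V$j) * mon V a b d v) = mon V a (Suc b) d" using 2 by (auto simp: mon_def fun_eq_iff)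
    then show ?thesis using Q_mon[of a "Suc b" d k V] assms by simp
  next
    case 3
    have "(\<lambda>v. (v$j - V$j) * mon V a b d v) = mon V a b (Suc d)" using 3 by (auto simp: mon_def fun_eq_iff)
    then show ?thesis using Q_mon[of a b "Suc d" k V] assms by simp
  qed
qed

lemma Q_term: assumes "a+b+d \<le> k"
  shows "(\<lambda>v. real a * ((v$j - V$j) * mon V (a-1) b d v)) \<in> Q V k"
    "(\<lambda>v. real b * ((v$j - V$j) * mon V a (b-1) d v)) \<in> Q V k"
    "(\<lambda>v. real d * ((v$j - V$j) * mon V a b (d-1) v)) \<in> Q V k"
proof -
  show "(\<lambda>v. real a * ((v$j - V$j) * mon V (a-1) b d v)) \<in> Q V k"
  proof (cases a)
    case 0 then show ?thesis using Q_zero by simp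
  next
    case (Suc a') then show ?thesis using assms by (intro Q_scale Q_ymul) simp
  qed
  show "(\<lambda>v. real b * ((v$j - V$j) * mon V a (b-1) d v)) \<in> Q V k"
  proof (cases b)
    case 0 then show ?thesis using Q_zero by simp
  next
    case (Suc a') then show ?thesis using assms by (intro Q_scale Q_ymul) simp
  qed
  show "(\<lambda>v. real d * ((v$j - V$j) * mon V a b (d-1) v)) \<in> Q V k"
  proof (cases d)
    case 0 then show ?thesis using Q_zero by simp
  next
    case (Suc a') then show ?thesis using assms by (intro Q_scale Q_ymul) simp
  qed
qed

lemma H_comp: fixes C :: "3 \<Rightarrow> nat \<Rightarrow> nat \<Rightarrow> nat \<Rightarrow> real"
  shows "H V (C 1 a b d) (C 2 a b d) (C 3 a b d) a b d v $ i = C i a b d * mon V a b d v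
   - (1 / real (a+b+d+2)) * (C 1 a b d * (real a * ((v$i - V$i) * mon V (a-1) b d v))
       + C 2 a b d * (real b * ((v$i - V$i) * mon V a (b-1) d v)) + C 3 a b d * (real d * ((v$i - V$i) * mon V a b (d-1) v)))"
  using exhaust_3[of i] by (auto simp: H_def PP_def axis_def algebra_simps)

lemma H_Q: fixes C :: "3 \<Rightarrow> nat \<Rightarrow> nat \<Rightarrow> nat \<Rightarrow> real"
  assumes "a+b+d \<le> k" shows "(\<lambda>v. H V (C 1 a b d) (C 2 a b d) (C 3 a b d) a b d v $ i) \<in> Q V k"
  unfolding H_comp
  by (intro Q_diff Q_scale Q_mon Q_add Q_term assms)


lemma H_comp2: fixes C :: "3 \<Rightarrow> nat \<Rightarrow> nat \<Rightarrow> nat \<Rightarrow> real"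
  shows "H V (C 1 a b d) (C 2 a b d) (C 3 a b d) a b d v $ i = C i a b d * mon V a b d v
     - PP V (C 1 a b d) (C 2 a b d) (C 3 a b d) a b d v * (v$i - V$i)"
  using exhaust_3[of i] by (auto simp: H_def axis_def)

theorem theorem7p1:
  fixes \<Omega> :: "(real^3) set" and V :: "real^3" and k :: nat
  assumes "open \<Omega>" and "\<Omega> \<noteq> {}" and "V \<in> \<Omega>"
  shows "{restrict (koszul V q1) \<Omega> | q1. q1 \<in> polyvec3 k}
       = {restrict (koszul V q2) \<Omega> | q2. q2 \<in> polyvec3 k \<and> (\<forall>v\<in>\<Omega>. divergence q2 v = 0)}"
proof (rule set_eqI, rule iffI)
  fix f assume "f \<in> {restrict (koszul V q2) \<Omega> | q2. q2 \<in> polyvec3 k \<and> (\<forall>v\<in>\<Omega>. divergence q2 v = 0)}"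
  then show "f \<in> {restrict (koszul V q1) \<Omega> | q1. q1 \<in> polyvec3 k}" by blast
next
  fix f assume "f \<in> {restrict (koszul V q1) \<Omega> | q1. q1 \<in> polyvec3 k}"
  then obtain q where f: "f = restrict (koszul V q) \<Omega>" and q: "q \<in> polyvec3 k" by blast
  have ex: "\<forall>i. \<exists>c. \<forall>v. q v $ i = (\<Sum>(a,b,d)\<in>S k. c a b d * mon V a b d v)"
  proof
    fix i
    have "(\<lambda>v. q v $ i) \<in> Q V k"
      using q Q_change[of _ 0 k k V] unfolding polyvec3_def poly3_Q by auto
    then show "\<exists>c. \<forall>v. q v $ i = (\<Sum>(a,b,d)\<in>S k. c a b d * mon V a b d v)" by (auto simp: Q_def)
  qed
  obtain C where C0: "\<forall>i. \<forall>v. q v $ i = (\<Sum>(a,b,d)\<in>S k. C i a b d * mon V a b d v)"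
    using choice[OF ex] by blast
  have C: "\<And>i v. q v $ i = (\<Sum>(a,b,d)\<in>S k. C i a b d * mon V a b d v)" using C0 by blast
  define q2 where "q2 v = (\<Sum>x\<in>S k. case x of (a,b,d) \<Rightarrow> H V (C 1 a b d) (C 2 a b d) (C 3 a b d) a b d v)" for v
  have poly: "q2 \<in> polyvec3 k"
    unfolding polyvec3_def poly3_Q
  proof (intro CollectI allI)
    fix i
    have "(\<lambda>v. q2 v $ i) = (\<lambda>v. \<Sum>(a,b,d)\<in>S k. H V (C 1 a b d) (C 2 a b d) (C 3 a b d) a b d v $ i)"
      unfolding q2_def sum_component by (intro ext sum.cong refl) (auto split: prod.splits)
    also have "\<dots> \<in> Q V k"
      by (rule Q_sum_S) (rule H_Q)
    finally show "(\<lambda>v. q2 v $ i) \<in> Q 0 k" by (rule Q_change) simp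
  qed
  have kos: "koszul V q2 v = koszul V q v" for v
  proof -
    let ?P = "\<Sum>x\<in>S k. case x of (a,b,d) \<Rightarrow> PP V (C 1 a b d) (C 2 a b d) (C 3 a b d) a b d v"
    have "q2 v = q v - ?P *\<^sub>R (v - V)"
    proof (subst vec_eq_iff, intro allI)
      fix i
      show "q2 v $ i = (q v - ?P *\<^sub>R (v - V)) $ i"
      proof -
        have "q2 v $ i = (\<Sum>x\<in>S k. (case x of (a,b,d) \<Rightarrow> C i a b d * mon V a b d v)
           - (case x of (a,b,d) \<Rightarrow> PP V (C 1 a b d) (C 2 a b d) (C 3 a b d) a b d v) * (v$i - V$i))"
          unfolding q2_def sum_component by (intro sum.cong refl) (auto split: prod.splits simp: H_comp2)
        also have "\<dots> = q v $ i - ?P * (v$i - V$i)"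
          unfolding sum_subtractf sum_distrib_right[symmetric] C ..
        finally show ?thesis by simp
      qed
    qed
    then show ?thesis
      by (simp add: koszul_def Cross3.right_diff_distrib cross_mult_right)
  qed
  have div: "divergence q2 v = 0" for v
  proof -
    have "(q2 has_derivative (\<lambda>h. \<Sum>x\<in>S k. case x of (a,b,d) \<Rightarrow> DH V (C 1 a b d) (C 2 a b d) (C 3 a b d) a b d v h)) (at v)"
      unfolding q2_def[abs_def]
    proof (rule has_derivative_sum)
      fix x assume "x \<in> S k"
      obtain a b d where x: "x = (a,b,d)" by (cases x)
      show "((\<lambda>v. case x of (a,b,d) \<Rightarrow> H V (C 1 a b d) (C 2 a b d) (C 3 a b d) a b d v) has_derivative
         (\<lambda>h. case x of (a,b,d) \<Rightarrow> DH V (C 1 a b d) (C 2 a b d) (C 3 a b d) a b d v h)) (at v)"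
        unfolding x using H_deriv by simp
    qed
    then have fd: "frechet_derivative q2 (at v) = (\<lambda>h. \<Sum>x\<in>S k. case x of (a,b,d) \<Rightarrow> DH V (C 1 a b d) (C 2 a b d) (C 3 a b d) a b d v h)"
      by (rule frechet_derivative_at[symmetric])
    have "divergence q2 v = (\<Sum>x\<in>S k. case x of (a,b,d) \<Rightarrow> \<Sum>j\<in>UNIV. DH V (C 1 a b d) (C 2 a b d) (C 3 a b d) a b d v (axis j 1) $ j)"
      unfolding divergence_def fd sum_component
      apply (subst sum.swap)
      apply (rule sum.cong[OF refl])
      apply (auto split: prod.splits)
      done
    also have "\<dots> = 0" by (rule sum.neutral) (auto simp: H_div split: prod.splits)
    finally show ?thesis .
  qed
  have "f = restrict (koszul V q2) \<Omega>" using f kos by (simp add: fun_eq_iff)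
  then show "f \<in> {restrict (koszul V q2) \<Omega> | q2. q2 \<in> polyvec3 k \<and> (\<forall>v\<in>\<Omega>. divergence q2 v = 0)}"
    using poly div by blast
qed

end
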